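(* There is some $d_0$ such that the following holds for every $d\geq d_0$ and every positive integer $t$. Let $G$ be a finite bipartite graph with average degree $d\geq t^4$ which contains no $C_4$-free subgraph with average degree at least $t$. Then there is a vertex $v\in V(G)$ and disjoint sets $A'\subseteq N(v)$ and $B'\subseteq V(G)\setminus\{v\}$ such that $d(G[A',B'])\geq d^{1/5}$.
   Context: $d(\cdot)$ denotes average degree, $d(F)=2e(F)/|V(F)|$. $N(v)$ is the neighbourhood of $v$ in $G$. For disjoint vertex sets $A',B'$, $G[A',B']$ is the bipartite subgraph of $G$ with vertex set $A'\cup B'$ consisting of all edges of $G$ between $A'$ and $B'$. A graph is $C_4$-free if it contains no $4$-cycle as a subgraph. *)

theory Defs
  imports Complex_Main
begin

definition graph :: "'a set \<Rightarrow> 'a set set \<Rightarrow> bool" where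
  "graph V E \<longleftrightarrow> finite V \<and> (\<forall>e\<in>E. \<exists>x y. x \<noteq> y \<and> x \<in> V \<and> y \<in> V \<and> e = {x, y})"

definition bipartite :: "'a set \<Rightarrow> 'a set set \<Rightarrow> bool" where
  "bipartite V E \<longleftrightarrow> (\<exists>X Y. X \<union> Y = V \<and> X \<inter> Y = {} \<and>
      (\<forall>e\<in>E. \<exists>x\<in>X. \<exists>y\<in>Y. e = {x, y}))"

definition avg_deg :: "'a set \<Rightarrow> 'a set set \<Rightarrow> real" where
  "avg_deg V E = 2 * real (card E) / real (card V)"

definition subgraph :: "'a set \<Rightarrow> 'a set set \<Rightarrow> 'a set \<Rightarrow> 'a set set \<Rightarrow> bool" where
  "subgraph V' E' V E \<longleftrightarrow> V' \<subseteq> V \<and> E' \<subseteq> E \<and> graph V' E'"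

definition C4_free :: "'a set set \<Rightarrow> bool" where
  "C4_free E \<longleftrightarrow> \<not> (\<exists>a b c d. distinct [a, b, c, d] \<and>
      {a, b} \<in> E \<and> {b, c} \<in> E \<and> {c, d} \<in> E \<and> {d, a} \<in> E)"

definition nbhd :: "'a set set \<Rightarrow> 'a \<Rightarrow> 'a set" where
  "nbhd E v = {u. {v, u} \<in> E}"

definition bip_edges :: "'a set set \<Rightarrow> 'a set \<Rightarrow> 'a set \<Rightarrow> 'a set set" where
  "bip_edges E A B = {e \<in> E. \<exists>a\<in>A. \<exists>b\<in>B. e = {a, b}}"

end

theory Submission
  imports Defs
begin

lemma handshake:
  assumes S: "finite S" and M: "\<forall>e\<in>M. \<exists>x y. x \<noteq> y \<and> x \<in> S \<and> y \<in> S \<and> e = {x,y}"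
  shows "(\<Sum>v\<in>S. card {w\<in>S. {v,w} \<in> M}) = 2 * card M"
proof -
  have "M \<subseteq> Pow S"
  proof
    fix e assume "e \<in> M"
    then obtain x y where "x \<in> S" "y \<in> S" "e = {x,y}" using M by blast
    then show "e \<in> Pow S" by auto
  qed
  moreover have "finite (Pow S)" using S by simp
  ultimately have fM: "finite M" by (rule finite_subset)
  have 1: "card {w\<in>S. {v,w} \<in> M} = card {e\<in>M. v \<in> e}" if "v \<in> S" for v
  proof (rule bij_betw_same_card)
    show "bij_betw (\<lambda>w. {v,w}) {w\<in>S. {v,w} \<in> M} {e\<in>M. v \<in> e}"
      unfolding bij_betw_def
    proof
      show "inj_on (\<lambda>w. {v,w}) {w\<in>S. {v,w} \<in> M}"
        by (auto simp: inj_on_def doubleton_eq_iff)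
      show "(\<lambda>w. {v,w}) ` {w\<in>S. {v,w} \<in> M} = {e\<in>M. v \<in> e}"
      proof
        show "(\<lambda>w. {v,w}) ` {w\<in>S. {v,w} \<in> M} \<subseteq> {e\<in>M. v \<in> e}" by auto
        show "{e\<in>M. v \<in> e} \<subseteq> (\<lambda>w. {v,w}) ` {w\<in>S. {v,w} \<in> M}"
        proof
          fix e assume "e \<in> {e\<in>M. v \<in> e}"
          then have e: "e \<in> M" "v \<in> e" by auto
          then obtain x y where xy: "x \<in> S" "y \<in> S" "e = {x,y}" using M by blast
          show "e \<in> (\<lambda>w. {v,w}) ` {w\<in>S. {v,w} \<in> M}"
          proof (cases "v = x")
            case True
            then have "e = {v,y}" "y \<in> S" using xy by auto
            then show ?thesis using e(1) by blast
          next
            case False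
            then have "v = y" using e(2) xy(3) by auto
            then have "e = {v,x}" "x \<in> S" using xy by auto
            then show ?thesis using e(1) by blast
          qed
        qed
      qed
    qed
  qed
  have 2: "card {e\<in>M. v \<in> e} = (\<Sum>e\<in>M. if v \<in> e then 1 else 0)" for v
  proof -
    have "(\<Sum>e\<in>M. if v \<in> e then 1 else 0) = card (M \<inter> {e. v \<in> e})"
      using fM by (simp add: sum.If_cases)
    also have "M \<inter> {e. v \<in> e} = {e\<in>M. v \<in> e}" by auto
    finally show ?thesis by simp
  qed
  have "(\<Sum>v\<in>S. card {w\<in>S. {v,w} \<in> M}) = (\<Sum>v\<in>S. card {e\<in>M. v \<in> e})"
    using 1 by simp
  also have "\<dots> = (\<Sum>v\<in>S. \<Sum>e\<in>M. if v \<in> e then 1 else 0)"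
    using 2 by simp
  also have "\<dots> = (\<Sum>e\<in>M. \<Sum>v\<in>S. if v \<in> e then 1 else 0)"
    by (rule sum.swap)
  also have "\<dots> = (\<Sum>e\<in>M. 2)"
  proof (rule sum.cong)
    fix e assume "e \<in> M"
    then obtain x y where "x \<noteq> y" "x \<in> S" "y \<in> S" "e = {x,y}" using M by blast
    then have "S \<inter> e = {x,y}" by auto
    then show "(\<Sum>v\<in>S. if v \<in> e then 1 else 0) = (2::nat)"
      using S \<open>x \<noteq> y\<close> by (simp add: sum.If_cases)
  qed simp
  finally show ?thesis by simp
qed
lemma degen_rank:
  assumes "finite S"
    and low: "\<And>S'. S' \<subseteq> S \<Longrightarrow> S' \<noteq> {} \<Longrightarrow> \<exists>v\<in>S'. card {w\<in>S'. R v w} < t"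
  shows "\<exists>f::'a\<Rightarrow>nat. inj_on f S \<and> (\<forall>v\<in>S. card {w\<in>S. R v w \<and> f v < f w} < t)"
  using assms
proof (induction "card S" arbitrary: S)
  case 0
  then show ?case by auto
next
  case (Suc k)
  then have "S \<noteq> {}" by auto
  then obtain v where v: "v \<in> S" "card {w\<in>S. R v w} < t" using Suc.prems(2)[of S] by blast
  have "k = card (S - {v})" using Suc.hyps(2) v by simp
  moreover have low': "\<And>S'. S' \<subseteq> S - {v} \<Longrightarrow> S' \<noteq> {} \<Longrightarrow> \<exists>v\<in>S'. card {w\<in>S'. R v w} < t"
    using Suc.prems(2) by blast
  ultimately have "\<exists>f::'a\<Rightarrow>nat. inj_on f (S - {v}) \<and> (\<forall>u\<in>S-{v}. card {w\<in>S-{v}. R u w \<and> f u < f w} < t)"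
    using Suc.hyps(1)[of "S - {v}"] Suc.prems(1) by blast
  then obtain f :: "'a\<Rightarrow>nat" where f: "inj_on f (S - {v})" "\<forall>u\<in>S-{v}. card {w\<in>S-{v}. R u w \<and> f u < f w} < t"
    by blast
  define g where "g = (\<lambda>w. if w = v then 0 else Suc (f w))"
  have "inj_on g S" using f(1) unfolding g_def inj_on_def by auto
  moreover have "card {w\<in>S. R u w \<and> g u < g w} < t" if u: "u \<in> S" for u
  proof (cases "u = v")
    case True
    have "{w\<in>S. R u w \<and> g u < g w} \<subseteq> {w\<in>S. R v w}" using True by auto
    moreover have "finite {w\<in>S. R v w}" using Suc.prems(1) by simp
    ultimately show ?thesis using v card_mono le_less_trans by metis
  next
    case False
    have "{w\<in>S. R u w \<and> g u < g w} = {w\<in>S-{v}. R u w \<and> f u < f w}"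
      using False unfolding g_def by auto
    then show ?thesis using f(2) u False by auto
  qed
  ultimately show ?case by blast
qed


lemma c4_path:
  assumes "C4_free M" "\<not> C4_free (insert e M)"
  shows "\<exists>x a b y. e = {x,y} \<and> distinct [x,a,b,y] \<and> {x,a}\<in>M \<and> {a,b}\<in>M \<and> {b,y}\<in>M"
proof -
  have "\<exists>a b c d. distinct [a,b,c,d] \<and> {a,b} \<in> insert e M \<and> {b,c} \<in> insert e M \<and>
    {c,d} \<in> insert e M \<and> {d,a} \<in> insert e M"
    using assms(2) unfolding C4_free_def by (rule notnotD)
  then obtain a b c d where abcd: "distinct [a,b,c,d]" "{a,b} \<in> insert e M" "{b,c} \<in> insert e M"
    "{c,d} \<in> insert e M" "{d,a} \<in> insert e M"
    by (elim exE conjE)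
  have ne: "{a,b} \<noteq> {b,c}" "{a,b} \<noteq> {c,d}" "{a,b} \<noteq> {d,a}" "{b,c} \<noteq> {c,d}" "{b,c} \<noteq> {d,a}" "{c,d} \<noteq> {d,a}"
    using abcd(1) by (auto simp: doubleton_eq_iff)
  have notall: "\<not> ({a,b} \<in> M \<and> {b,c} \<in> M \<and> {c,d} \<in> M \<and> {d,a} \<in> M)"
  proof
    assume H: "{a,b} \<in> M \<and> {b,c} \<in> M \<and> {c,d} \<in> M \<and> {d,a} \<in> M"
    have "\<exists>a b c d. distinct [a, b, c, d] \<and> {a, b} \<in> M \<and> {b, c} \<in> M \<and> {c, d} \<in> M \<and> {d, a} \<in> M"
      apply (rule exI[of _ a], rule exI[of _ b], rule exI[of _ c], rule exI[of _ d])
      using abcd(1) H by simp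
    then show False using assms(1) unfolding C4_free_def by simp
  qed
  have i2: "{a,b} = e \<or> {a,b} \<in> M" using abcd(2) by simp
  have i3: "{b,c} = e \<or> {b,c} \<in> M" using abcd(3) by simp
  have i4: "{c,d} = e \<or> {c,d} \<in> M" using abcd(4) by simp
  have i5: "{d,a} = e \<or> {d,a} \<in> M" using abcd(5) by simp
  show ?thesis
  proof (cases "{a,b} = e")
    case True
    then have "{b,c} \<in> M" "{c,d} \<in> M" "{d,a} \<in> M" using i3 i4 i5 ne by metis+
    moreover have "e = {b,a}" using True by (simp add: insert_commute)
    moreover have "distinct [b,c,d,a]" using abcd(1) by auto
    ultimately show ?thesis by blast
  next
    case F1: False
    show ?thesis
    proof (cases "{b,c} = e")
      case True
      then have "{a,b} \<in> M" "{c,d} \<in> M" "{d,a} \<in> M" using i2 i4 i5 ne by metis+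
      moreover have "e = {c,b}" using True by (simp add: insert_commute)
      moreover have "distinct [c,d,a,b]" using abcd(1) by auto
      ultimately show ?thesis by blast
    next
      case F2: False
      show ?thesis
      proof (cases "{c,d} = e")
        case True
        then have "{a,b} \<in> M" "{b,c} \<in> M" "{d,a} \<in> M" using i2 i3 i5 ne by metis+
        moreover have "e = {d,c}" using True by (simp add: insert_commute)
        moreover have "distinct [d,a,b,c]" using abcd(1) by auto
        ultimately show ?thesis by blast
      next
        case F3: False
        have m: "{a,b} \<in> M" "{b,c} \<in> M" "{c,d} \<in> M" using i2 i3 i4 F1 F2 F3 by auto
        then have "\<not> {d,a} \<in> M" using notall by blast
        then have "{d,a} = e" using i5 by blast
        then have "e = {a,d}" by (simp add: insert_commute)
        then show ?thesis using m abcd(1) by blast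
      qed
    qed
  qed
qed

lemma bip_no_tri:
  assumes "bipartite V E" "{p,q} \<in> E" "{q,s} \<in> E" "{s,p} \<in> E"
  shows False
proof -
  have "\<exists>X Y. X \<union> Y = V \<and> X \<inter> Y = {} \<and> (\<forall>e\<in>E. \<exists>x\<in>X. \<exists>y\<in>Y. e = {x,y})"
    using assms(1) unfolding bipartite_def .
  then obtain X Y where XY: "X \<union> Y = V" "X \<inter> Y = {}" "\<forall>e\<in>E. \<exists>x\<in>X. \<exists>y\<in>Y. e = {x,y}"
    by (elim exE conjE)
  have key: "(u \<in> X) = (w \<notin> X)" if "{u,w} \<in> E" for u w
  proof -
    have "\<exists>x\<in>X. \<exists>y\<in>Y. {u,w} = {x,y}" using XY(3) that by (rule bspec)
    then obtain x y where xy: "x \<in> X" "y \<in> Y" "{u,w} = {x,y}" by (elim bexE)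
    have yX: "y \<notin> X" using xy(2) XY(2) by blast
    from xy(3) have "(u = x \<and> w = y) \<or> (u = y \<and> w = x)" by (simp add: doubleton_eq_iff)
    then show ?thesis
    proof
      assume "u = x \<and> w = y" then show ?thesis using xy(1) yX by simp
    next
      assume "u = y \<and> w = x" then show ?thesis using xy(1) yX by simp
    qed
  qed
  have k1: "(p \<in> X) = (q \<notin> X)" by (rule key[OF assms(2)])
  have k2: "(q \<in> X) = (s \<notin> X)" by (rule key[OF assms(3)])
  have k3: "(s \<in> X) = (p \<notin> X)" by (rule key[OF assms(4)])
  show False using k1 k2 k3 by argo
qed

lemma C4_mono: assumes "M' \<subseteq> M" "C4_free M" shows "C4_free M'"
  unfolding C4_free_def
proof
  assume "\<exists>a b c d. distinct [a, b, c, d] \<and> {a, b} \<in> M' \<and> {b, c} \<in> M' \<and> {c, d} \<in> M' \<and> {d, a} \<in> M'"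
  then obtain a b c d where "distinct [a, b, c, d]" "{a, b} \<in> M'" "{b, c} \<in> M'" "{c, d} \<in> M'" "{d, a} \<in> M'" by blast
  then show False using assms unfolding C4_free_def by blast
qed

theorem corollary7:
  shows "\<exists>d0::real. \<forall>d::real. \<forall>t::nat. \<forall>(V::nat set) E.
    d \<ge> d0 \<longrightarrow> t > 0 \<longrightarrow> graph V E \<longrightarrow> bipartite V E \<longrightarrow>
    avg_deg V E = d \<longrightarrow> d \<ge> real t ^ 4 \<longrightarrow>
    \<not> (\<exists>V' E'. subgraph V' E' V E \<and> C4_free E' \<and> avg_deg V' E' \<ge> real t) \<longrightarrow>
    (\<exists>v\<in>V. \<exists>A' B'. A' \<inter> B' = {} \<and> A' \<subseteq> nbhd E v \<and> B' \<subseteq> V - {v} \<and>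
       avg_deg (A' \<union> B') (bip_edges E A' B') \<ge> d powr (1/5))"
proof (rule exI[of _ "5^10"], intro allI impI)
  fix d :: real and t :: nat and V :: "nat set" and E
  assume d: "d \<ge> 5^10" and t: "t > 0" and g: "graph V E" and bip: "bipartite V E"
    and ad: "avg_deg V E = d" and dt: "d \<ge> real t ^ 4"
    and noC4: "\<not> (\<exists>V' E'. subgraph V' E' V E \<and> C4_free E' \<and> avg_deg V' E' \<ge> real t)"
  define c where "c = d powr (1/5)"
  show "\<exists>v\<in>V. \<exists>A' B'. A' \<inter> B' = {} \<and> A' \<subseteq> nbhd E v \<and> B' \<subseteq> V - {v} \<and>
       avg_deg (A' \<union> B') (bip_edges E A' B') \<ge> d powr (1/5)"
  proof (rule ccontr)
    assume neg: "\<not> ?thesis"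
    have finV: "finite V" using g unfolding graph_def by (rule conjunct1)
    have Eedge: "\<forall>e\<in>E. \<exists>x y. x \<noteq> y \<and> x \<in> V \<and> y \<in> V \<and> e = {x,y}"
      using g unfolding graph_def by (rule conjunct2)
    have "E \<subseteq> Pow V"
    proof
      fix e assume "e \<in> E"
      with Eedge have "\<exists>x y. x \<noteq> y \<and> x \<in> V \<and> y \<in> V \<and> e = {x,y}" by (rule bspec)
      then obtain x y where "x \<in> V" "y \<in> V" "e = {x,y}" by (elim exE conjE)
      then show "e \<in> Pow V" by auto
    qed
    moreover have "finite (Pow V)" using finV by simp
    ultimately have finE: "finite E" by (rule finite_subset)
    have npos: "card V > 0"
    proof (rule ccontr)
      assume "\<not> card V > 0"
      then have "avg_deg V E = 0" unfolding avg_deg_def by simp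
      then show False using ad d by simp
    qed
    have dn: "d * real (card V) = 2 * real (card E)"
      using ad npos unfolding avg_deg_def by (simp add: field_simps)
    have "\<exists>M. (M \<subseteq> E \<and> C4_free M) \<and> (\<forall>M'. (M' \<subseteq> E \<and> C4_free M') \<longrightarrow> card M' \<le> card M)"
    proof (rule ex_has_greatest_nat[where b = "Suc (card E)"])
      show "{} \<subseteq> E \<and> C4_free {}" unfolding C4_free_def by simp
      show "\<forall>y. y \<subseteq> E \<and> C4_free y \<longrightarrow> card y < Suc (card E)"
        using finE card_mono le_imp_less_Suc by blast
    qed
    then obtain M where ME: "M \<subseteq> E" and MC4: "C4_free M"
      and Mmax: "\<And>M'. M' \<subseteq> E \<Longrightarrow> C4_free M' \<Longrightarrow> card M' \<le> card M" by blast
    have finM: "finite M" using ME finE finite_subset by blast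
    have maxM: "\<not> C4_free (insert e M)" if "e \<in> E" "e \<notin> M" for e
    proof
      assume "C4_free (insert e M)"
      then have "card (insert e M) \<le> card M" using Mmax that ME by blast
      then show False using that finM by simp
    qed
    have Medge: "\<forall>e\<in>M. \<exists>x y. x \<noteq> y \<and> x \<in> V \<and> y \<in> V \<and> e = {x,y}"
    proof
      fix e assume "e \<in> M"
      then have "e \<in> E" by (rule subsetD[OF ME])
      with Eedge show "\<exists>x y. x \<noteq> y \<and> x \<in> V \<and> y \<in> V \<and> e = {x,y}" by (rule bspec)
    qed
    have Mv: "u \<in> V \<and> w \<in> V \<and> u \<noteq> w" if "{u,w} \<in> M" for u w
    proof -
      from Medge that have "\<exists>x y. x \<noteq> y \<and> x \<in> V \<and> y \<in> V \<and> {u,w} = {x,y}" by (rule bspec)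
      then obtain x y where "x \<noteq> y" "x \<in> V" "y \<in> V" "{u,w} = {x,y}" by (elim exE conjE)
      then show ?thesis by (auto simp: doubleton_eq_iff)
    qed
    have low: "\<exists>v\<in>S'. card {w\<in>S'. {v,w} \<in> M} < t" if S': "S' \<subseteq> V" "S' \<noteq> {}" for S'
    proof (rule ccontr)
      assume "\<not> ?thesis"
      then have ge: "\<forall>v\<in>S'. t \<le> card {w\<in>S'. {v,w} \<in> M}" by auto
      define MS where "MS = {e\<in>M. e \<subseteq> S'}"
      have finS: "finite S'" using S' finV finite_subset by blast
      have MSedge: "\<forall>e\<in>MS. \<exists>x y. x \<noteq> y \<and> x \<in> S' \<and> y \<in> S' \<and> e = {x,y}"
      proof
        fix e assume "e \<in> MS"
        then have e: "e \<in> M" "e \<subseteq> S'" unfolding MS_def by auto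
        from Medge e(1) have "\<exists>x y. x \<noteq> y \<and> x \<in> V \<and> y \<in> V \<and> e = {x,y}" by (rule bspec)
        then obtain x y where xy: "x \<noteq> y" "e = {x,y}" by (elim exE conjE)
        then have "x \<in> S'" "y \<in> S'" using e(2) by auto
        then show "\<exists>x y. x \<noteq> y \<and> x \<in> S' \<and> y \<in> S' \<and> e = {x,y}" using xy by (intro exI) auto
      qed
      have eqs: "{w\<in>S'. {v,w} \<in> MS} = {w\<in>S'. {v,w} \<in> M}" if "v \<in> S'" for v
        using that unfolding MS_def by auto
      have "(\<Sum>v\<in>S'. card {w\<in>S'. {v,w} \<in> MS}) = 2 * card MS"
        by (rule handshake[OF finS MSedge])
      moreover have "(\<Sum>v\<in>S'. card {w\<in>S'. {v,w} \<in> MS}) \<ge> (\<Sum>v\<in>S'. t)"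
        using ge eqs by (intro sum_mono) auto
      ultimately have "t * card S' \<le> 2 * card MS" by (simp add: mult.commute)
      then have "real t * real (card S') \<le> 2 * real (card MS)" by (metis of_nat_le_iff of_nat_mult of_nat_numeral)
      moreover have "card S' > 0" using finS S'(2) by (simp add: card_gt_0_iff)
      ultimately have av: "avg_deg S' MS \<ge> real t" unfolding avg_deg_def by (simp add: field_simps)
      have "MS \<subseteq> E" using ME unfolding MS_def by auto
      then have sg: "subgraph S' MS V E" by (simp add: subgraph_def graph_def S'(1) finS MSedge)
      have "MS \<subseteq> M" unfolding MS_def by auto
      then have "C4_free MS" using MC4 by (rule C4_mono)
      then show False using noC4 sg av by blast
    qed
    obtain rk :: "nat \<Rightarrow> nat" where rkinj: "inj_on rk V"
      and rkF: "\<forall>v\<in>V. card {w\<in>V. {v,w} \<in> M \<and> rk v < rk w} < t"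
      using degen_rank[OF finV, of "\<lambda>v w. {v,w} \<in> M" t] low by blast
    define F where "F u = {w\<in>V. {u,w} \<in> M \<and> rk u < rk w}" for u
    define A where "A r = {w\<in>V. {r,w} \<in> M}" for r
    define Q where "Q r = {w\<in>V. \<exists>u. {r,u} \<in> M \<and> {u,w} \<in> M \<and> (rk u < rk r \<or> rk u < rk w)}" for r
    define B where "B r = Q r - {r} - A r" for r
    define BE where "BE r = bip_edges E (A r) (B r)" for r
    have finA: "finite (A r)" for r unfolding A_def using finV by simp
    have finQ: "finite (Q r)" for r unfolding Q_def using finV by simp
    have finB: "finite (B r)" for r unfolding B_def using finQ by simp
    have finF: "finite (F r)" for r unfolding F_def using finV by simp
    have Fle: "card (F u) \<le> t" if "u \<in> V" for u using rkF that unfolding F_def by (simp add: less_imp_le)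
    have small: "2 * real (card (BE r)) \<le> c * (real (card (A r)) + real (card (B r)))" if r: "r \<in> V" for r
    proof -
      have "A r \<inter> B r = {}" "A r \<subseteq> nbhd E r" "B r \<subseteq> V - {r}"
        unfolding A_def B_def Q_def nbhd_def using ME by auto
      then have lt: "\<not> avg_deg (A r \<union> B r) (BE r) \<ge> c" using neg r unfolding BE_def c_def by blast
      have c0: "c \<ge> 0" unfolding c_def by simp
      show ?thesis
      proof (cases "card (A r \<union> B r) = 0")
        case True
        then have "A r = {}" "B r = {}" using finA finB by auto
        then have "BE r = {}" unfolding BE_def bip_edges_def by auto
        then show ?thesis using c0 by simp
      next
        case False
        then have "2 * real (card (BE r)) < c * real (card (A r \<union> B r))"
          using lt unfolding avg_deg_def by (simp add: field_simps not_le)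
        moreover have "real (card (A r \<union> B r)) \<le> real (card (A r)) + real (card (B r))"
          using card_Un_le by (metis of_nat_add of_nat_le_iff)
        ultimately show ?thesis using c0 by (smt (verit) mult_left_mono)
      qed
    qed
    have cover: "E - M \<subseteq> (\<Union>r\<in>V. BE r)"
    proof
      fix e assume e: "e \<in> E - M"
      then have "e \<in> E" "e \<notin> M" by auto
      then have "\<not> C4_free (insert e M)" by (rule maxM)
      then have "\<exists>x a b y. e = {x,y} \<and> distinct [x,a,b,y] \<and> {x,a}\<in>M \<and> {a,b}\<in>M \<and> {b,y}\<in>M"
        using MC4 c4_path by blast
      then obtain x a b y where p: "e = {x,y}" "distinct [x,a,b,y]" "{x,a}\<in>M" "{a,b}\<in>M" "{b,y}\<in>M"
        by (elim exE conjE)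
      have inV: "x \<in> V" "a \<in> V" "b \<in> V" "y \<in> V" using Mv[OF p(3)] Mv[OF p(4)] Mv[OF p(5)] by auto
      have "{x,a} \<in> E" "{a,b} \<in> E" "{b,y} \<in> E" "{x,y} \<in> E" using p ME e by auto
      note E3 = this
      have "a \<noteq> b" using p(2) by simp
      then have rab: "rk a \<noteq> rk b" using rkinj inV unfolding inj_on_def by blast
      show "e \<in> (\<Union>r\<in>V. BE r)"
      proof (cases "rk a < rk b \<or> rk a < rk x")
        case True
        have yA: "y \<in> A b" unfolding A_def using inV p(5) by simp
        have xQ: "x \<in> Q b" unfolding Q_def using inV p(3,4) True by (auto simp: insert_commute)
        have "x \<notin> A b"
        proof
          assume "x \<in> A b"
          then have "{b,x} \<in> E" using ME unfolding A_def by auto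
          then show False using bip_no_tri[OF bip, of x a b] E3 by (auto simp: insert_commute)
        qed
        then have "x \<in> B b" using xQ p(2) unfolding B_def by auto
        moreover have "e = {y,x}" using p(1) by (simp add: insert_commute)
        ultimately have "e \<in> BE b" unfolding BE_def bip_edges_def using yA e by blast
        then show ?thesis using inV by blast
      next
        case False
        then have ba: "rk b < rk a" using rab by auto
        have xA: "x \<in> A a" unfolding A_def using inV p(3) by (simp add: insert_commute)
        have yQ: "y \<in> Q a" unfolding Q_def using inV p(4,5) ba by auto
        have "y \<notin> A a"
        proof
          assume "y \<in> A a"
          then have "{a,y} \<in> E" using ME unfolding A_def by auto
          then show False using bip_no_tri[OF bip, of a b y] E3 by (auto simp: insert_commute)
        qed
        then have "y \<in> B a" using yQ p(2) unfolding B_def by auto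
        then have "e \<in> BE a" unfolding BE_def bip_edges_def using xA e p(1) by blast
        then show ?thesis using inV by blast
      qed
    qed
    have sumA: "(\<Sum>r\<in>V. card (A r)) = 2 * card M"
      unfolding A_def by (rule handshake[OF finV Medge])
    have cardM: "2 * real (card M) < real t * real (card V)"
    proof -
      have "subgraph V M V E" unfolding subgraph_def graph_def using finV Medge ME by auto
      then have "\<not> avg_deg V M \<ge> real t" using noC4 MC4 by blast
      then show ?thesis using npos unfolding avg_deg_def by (simp add: field_simps not_le)
    qed
    define P1 where "P1 = (\<Union>r\<in>V. \<Union>u\<in>F r. {r} \<times> F u)"
    define P2 where "P2 = (\<Union>u\<in>V. F u \<times> F u)"
    define P3 where "P3 = (\<Union>w\<in>V. \<Union>u\<in>F w. F u \<times> {w})"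
    have FV: "F u \<subseteq> V" for u unfolding F_def by auto
    have cP1: "card P1 \<le> card V * (t * t)"
    proof -
      have "card P1 \<le> (\<Sum>r\<in>V. card (\<Union>u\<in>F r. {r} \<times> F u))"
        unfolding P1_def using finV by (rule card_UN_le)
      also have "\<dots> \<le> (\<Sum>r\<in>V. t * t)"
      proof (rule sum_mono)
        fix r assume r: "r \<in> V"
        have "card (\<Union>u\<in>F r. {r} \<times> F u) \<le> (\<Sum>u\<in>F r. card ({r} \<times> F u))"
          using finF by (rule card_UN_le)
        also have "\<dots> \<le> (\<Sum>u\<in>F r. t)"
          using Fle FV by (intro sum_mono) (auto simp: card_cartesian_product)
        also have "\<dots> \<le> t * t" using Fle[OF r] by simp
        finally show "card (\<Union>u\<in>F r. {r} \<times> F u) \<le> t * t" .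
      qed
      finally show ?thesis by simp
    qed
    have cP3: "card P3 \<le> card V * (t * t)"
    proof -
      have "card P3 \<le> (\<Sum>r\<in>V. card (\<Union>u\<in>F r. F u \<times> {r}))"
        unfolding P3_def using finV by (rule card_UN_le)
      also have "\<dots> \<le> (\<Sum>r\<in>V. t * t)"
      proof (rule sum_mono)
        fix r assume r: "r \<in> V"
        have "card (\<Union>u\<in>F r. F u \<times> {r}) \<le> (\<Sum>u\<in>F r. card (F u \<times> {r}))"
          using finF by (rule card_UN_le)
        also have "\<dots> \<le> (\<Sum>u\<in>F r. t)"
          using Fle FV by (intro sum_mono) (auto simp: card_cartesian_product)
        also have "\<dots> \<le> t * t" using Fle[OF r] by simp
        finally show "card (\<Union>u\<in>F r. F u \<times> {r}) \<le> t * t" .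
      qed
      finally show ?thesis by simp
    qed
    have cP2: "card P2 \<le> card V * (t * t)"
    proof -
      have "card P2 \<le> (\<Sum>u\<in>V. card (F u \<times> F u))"
        unfolding P2_def using finV by (rule card_UN_le)
      also have "\<dots> \<le> (\<Sum>u\<in>V. t * t)"
        using Fle by (intro sum_mono) (auto simp: card_cartesian_product mult_le_mono)
      finally show ?thesis by simp
    qed
    have sub: "Sigma V Q \<subseteq> P1 \<union> P2 \<union> P3"
    proof
      fix p assume "p \<in> Sigma V Q"
      then obtain r w where rw: "p = (r,w)" "r \<in> V" "w \<in> Q r" by blast
      then obtain u where u: "{r,u} \<in> M" "{u,w} \<in> M" "rk u < rk r \<or> rk u < rk w" "w \<in> V"
        unfolding Q_def by blast
      have uV: "u \<in> V" and ur: "u \<noteq> r" and uw: "u \<noteq> w" using Mv[OF u(1)] Mv[OF u(2)] by auto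
      have "rk u \<noteq> rk r" "rk u \<noteq> rk w" using rkinj uV ur uw rw(2) u(4) by (auto simp: inj_on_def)
      then consider "rk u < rk r" "rk u < rk w" | "rk u < rk r" "rk w < rk u" | "rk r < rk u" "rk u < rk w"
        using u(3) by linarith
      then show "p \<in> P1 \<union> P2 \<union> P3"
      proof cases
        case 1
        then have "r \<in> F u" "w \<in> F u" unfolding F_def using u rw uV by (auto simp: insert_commute)
        then show ?thesis unfolding P2_def using uV rw(1) by blast
      next
        case 2
        then have "r \<in> F u" "u \<in> F w" unfolding F_def using u rw uV by (auto simp: insert_commute)
        then show ?thesis unfolding P3_def using u(4) rw(1) by blast
      next
        case 3
        then have "u \<in> F r" "w \<in> F u" unfolding F_def using u rw uV by (auto simp: insert_commute)
        then show ?thesis unfolding P1_def using rw by blast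
      qed
    qed
    have sumB: "(\<Sum>r\<in>V. card (B r)) \<le> 3 * (card V * (t * t))"
    proof -
      have "(\<Sum>r\<in>V. card (B r)) \<le> (\<Sum>r\<in>V. card (Q r))"
        using finQ unfolding B_def by (intro sum_mono card_mono) auto
      also have "\<dots> = card (Sigma V Q)" using finV finQ by (simp add: card_SigmaI)
      also have "\<dots> \<le> card (P1 \<union> P2 \<union> P3)"
      proof (rule card_mono[OF _ sub])
        have "P1 \<union> P2 \<union> P3 \<subseteq> V \<times> V" unfolding P1_def P2_def P3_def using FV by blast
        then show "finite (P1 \<union> P2 \<union> P3)" using finV finite_subset by blast
      qed
      also have "\<dots> \<le> card P1 + card P2 + card P3" by (meson card_Un_le add_le_mono1 le_trans)
      finally show ?thesis using cP1 cP2 cP3 by linarith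
    qed
    have "card (E - M) \<le> card (\<Union>r\<in>V. BE r)"
    proof (rule card_mono[OF _ cover])
      show "finite (\<Union>r\<in>V. BE r)" using finV finE unfolding BE_def bip_edges_def by auto
    qed
    also have "\<dots> \<le> (\<Sum>r\<in>V. card (BE r))" using finV by (rule card_UN_le)
    finally have cEM: "card (E - M) \<le> (\<Sum>r\<in>V. card (BE r))" .
    have "card E = card (E - M) + card M" using ME finM finE
      by (metis card_Diff_subset card_mono le_add_diff_inverse2)
    then have "card E \<le> (\<Sum>r\<in>V. card (BE r)) + card M" using cEM by linarith
    then have cE: "real (card E) \<le> real (\<Sum>r\<in>V. card (BE r)) + real (card M)"
      by (metis of_nat_add of_nat_le_iff)
    have "2 * real (\<Sum>r\<in>V. card (BE r)) = (\<Sum>r\<in>V. 2 * real (card (BE r)))"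
      by (simp add: sum_distrib_left)
    also have "\<dots> \<le> (\<Sum>r\<in>V. c * (real (card (A r)) + real (card (B r))))"
      using small by (rule sum_mono)
    also have "\<dots> = c * (real (\<Sum>r\<in>V. card (A r)) + real (\<Sum>r\<in>V. card (B r)))"
      by (simp add: sum_distrib_left[symmetric] sum.distrib)
    also have "\<dots> \<le> c * (2 * real (card M) + 3 * (real (card V) * (real t * real t)))"
    proof -
      have "real (\<Sum>r\<in>V. card (B r)) \<le> 3 * (real (card V) * (real t * real t))"
        using sumB by (metis of_nat_le_iff of_nat_mult of_nat_numeral)
      then show ?thesis using sumA unfolding c_def by (intro mult_left_mono) auto
    qed
    finally have main: "2 * real (card E) \<le> 2 * real (card M) + c * (2 * real (card M) + 3 * (real (card V) * (real t * real t)))"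
      using cE by linarith
    let ?n = "real (card V)"
    have c0: "c \<ge> 0" unfolding c_def by simp
    have t1: "real t \<ge> 1" using t by simp
    have "d * ?n \<le> 2 * real (card M) + c * (2 * real (card M) + 3 * (?n * (real t * real t)))"
      using main dn by simp
    also have "\<dots> \<le> real t * ?n + c * (real t * ?n + 3 * (?n * (real t * real t)))"
      using cardM c0 by (smt (verit) mult_left_mono)
    also have "\<dots> \<le> real t * real t * ?n + c * (4 * (?n * (real t * real t)))"
    proof -
      have "real t \<le> real t * real t" using t1 by (simp add: mult_le_cancel_left1)
      then have a: "real t * ?n \<le> real t * real t * ?n" by (simp add: mult_right_mono)
      then have "c * (real t * ?n + 3 * (?n * (real t * real t))) \<le> c * (4 * (?n * (real t * real t)))"
        using c0 by (intro mult_left_mono) (auto simp: algebra_simps)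
      then show ?thesis using a by linarith
    qed
    finally have ineq: "d * ?n \<le> (real t * real t + 4 * c * (real t * real t)) * ?n"
      by (simp add: algebra_simps)
    have ineq2: "d \<le> real t * real t + 4 * c * (real t * real t)"
      using ineq npos by simp
    have dpos: "d > 0" using d by simp
    have tt: "real t * real t \<le> d powr (1/2)"
    proof -
      have "real t powr 4 \<le> d" using dt t by (simp add: powr_realpow)
      then have "(real t powr 4) powr (1/4) \<le> d powr (1/4)" by (intro powr_mono2) auto
      moreover have "(real t powr 4) powr (1/4) = real t"
        using t by (subst powr_powr) simp
      ultimately have tl: "real t \<le> d powr (1/4)" by simp
      then have "real t * real t \<le> d powr (1/4) * d powr (1/4)" by (intro mult_mono) auto
      also have "\<dots> = d powr (1/2)" by (simp add: powr_add[symmetric])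
      finally show ?thesis .
    qed
    have "c * (real t * real t) \<le> d powr (1/5) * d powr (1/2)" unfolding c_def using tt by (intro mult_left_mono) auto
    also have "\<dots> = d powr (7/10)" by (simp add: powr_add[symmetric])
    finally have ct: "c * (real t * real t) \<le> d powr (7/10)" .
    have "real t * real t \<le> d powr (7/10)"
    proof -
      have "d powr (1/2) \<le> d powr (7/10)" using d by (intro powr_mono) auto
      then show ?thesis using tt by linarith
    qed
    then have ineq3: "d \<le> 5 * d powr (7/10)" using ineq2 ct by linarith
    have "(5^10::real) powr (3/10) \<le> d powr (3/10)" using d by (intro powr_mono2) auto
    moreover have "(5^10::real) powr (3/10) = 125"
    proof -
      have "(5^10::real) = 5 powr 10" by (simp add: powr_realpow)
      then have "(5^10::real) powr (3/10) = 5 powr 3" by (simp add: powr_powr)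
      also have "\<dots> = 125" by (simp add: powr_realpow)
      finally show ?thesis .
    qed
    ultimately have "d powr (3/10) \<ge> 125" by simp
    moreover have "d = d powr (3/10) * d powr (7/10)" using dpos by (simp add: powr_add[symmetric])
    moreover have "d powr (7/10) > 0" using dpos by simp
    ultimately have "d \<ge> 125 * d powr (7/10)" by (metis mult_right_mono less_imp_le)
    then show False using ineq3 \<open>d powr (7/10) > 0\<close> by linarith
  qed
qed

end
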